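(* Let $G=(V,E)$ be a unit disk graph, $k$ a positive integer, $Y_k=(V,E_Y)$ its Yao graph and $YS_k=(V,E_{YS})$ the output of the Sink step applied to $Y_k$ (defined in the context). Then for each directed edge $\overrightarrow{uv}\in E_Y$ there is a sequence of vertices $w_0=v,w_1,\dots,w_h=u$, all lying in the cone $K_v(u)$, such that for each $i=1,\dots,h$: $\overrightarrow{w_iw_{i-1}}\in E_{YS}$, $w_i\in K_{w_{i-1}}(u)$, and $\mathrm{ID}(\overrightarrow{w_iw_{i-1}})\le \mathrm{ID}(\overrightarrow{uw_{i-1}})$.
   Context: Unit disk graph: $V$ a finite point set in the plane, $E=\{uv:|uv|\le1\}$ with $|uv|$ Euclidean distance. Cones: with $\theta=2\pi/k$, at each point $x$ the plane is partitioned into $k$ half-open half-closed cones with apex $x$ of angle $\theta$, bounded by $k$ equally spaced rays (same directions at every node); $K_x(y)$ is the cone with apex $x$ containing $y$; $K_x$ denotes an arbitrary such cone. Identifiers: nodes have distinct IDs; $\mathrm{ID}(\overrightarrow{xy})=(|xy|,\mathrm{ID}(x),\mathrm{ID}(y))$ compared lexicographically; $\mathrm{ID}(xy)=\min\{\mathrm{ID}(\overrightarrow{xy}),\mathrm{ID}(\overrightarrow{yx})\}$. Yao step: for each node $x$ and each cone $K_x$ containing the other endpoint of some edge of $E$ incident to $x$, add to $E_Y$ the directed edge $\overrightarrow{xy}$ where $xy$ is such an edge with lowest $\mathrm{ID}(xy)$. Sink step on $(V,E_Y)$: set $E_{YS}=\emptyset$. For each node $v$ and each cone $K_v$: let $I$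 be the set of vertices $x$ with $\overrightarrow{xv}\in E_Y$ and $x\in K_v$; set $I(v)\leftarrow I$ and initialize an ordered sequence $J\leftarrow(v)$ and $T(v)\leftarrow\emptyset$. Repeat until $I$ is empty: remove the first vertex $x$ from $J$; for each cone $K_x$ with apex $x$, let $w\in I(x)\cap K_x$ be the node minimizing $\mathrm{ID}(\overrightarrow{wx})$ (if any), add $\overrightarrow{wx}$ to $T(v)$, move $w$ from $I$ to $J$, and set $I(w)\leftarrow I(x)\cap K_x$. Then add all (directed) edges of $T(v)$ to $E_{YS}$. *)

theory Defs
  imports "HOL-Analysis.Analysis"
begin

text \<open>Cones: k cones of angle 2 pi / k,
bounded by rays at angles alpha + j 2pi/k (same at every node); cone j with apex x is
the set of points z different from x whose direction angle (measured from alpha,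
mod 2 pi) lies in the half-open interval [j 2pi/k, (j+1) 2pi/k).\<close>

definition cidx :: "nat \<Rightarrow> real \<Rightarrow> complex \<Rightarrow> complex \<Rightarrow> nat" where
  "cidx k \<alpha> x y = nat \<lfloor>real k * frac ((Arg (y - x) - \<alpha>) / (2 * pi))\<rfloor>"

definition cone :: "nat \<Rightarrow> real \<Rightarrow> complex \<Rightarrow> nat \<Rightarrow> complex set" where
  "cone k \<alpha> x j = {z. z \<noteq> x \<and> cidx k \<alpha> x z = j}"

text \<open>Directed identifier ID(xy) = (|xy|, ID x, ID y), compared lexicographically by lex_le.\<close>
definition lex_le :: "real \<times> nat \<times> nat \<Rightarrow> real \<times> nat \<times> nat \<Rightarrow> bool" where
  "lex_le p q = (case p of (a1, b1, c1) \<Rightarrow> case q of (a2, b2, c2) \<Rightarrow>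
     a1 < a2 \<or> (a1 = a2 \<and> (b1 < b2 \<or> (b1 = b2 \<and> c1 \<le> c2))))"

definition dID :: "(complex \<Rightarrow> nat) \<Rightarrow> complex \<Rightarrow> complex \<Rightarrow> real \<times> nat \<times> nat" where
  "dID idf x y = (cmod (x - y), idf x, idf y)"

definition uID :: "(complex \<Rightarrow> nat) \<Rightarrow> complex \<Rightarrow> complex \<Rightarrow> real \<times> nat \<times> nat" where
  "uID idf x y = (if lex_le (dID idf x y) (dID idf y x) then dID idf x y else dID idf y x)"

definition udg :: "complex set \<Rightarrow> (complex \<times> complex) set" where
  "udg V = {(x, y). x \<in> V \<and> y \<in> V \<and> x \<noteq> y \<and> cmod (x - y) \<le> 1}"

text \<open>Yao step: (x,y) means the directed edge x -> y.\<close>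
definition yao :: "nat \<Rightarrow> real \<Rightarrow> (complex \<Rightarrow> nat) \<Rightarrow> complex set \<Rightarrow> (complex \<times> complex) set" where
  "yao k \<alpha> idf V = {(x, y). (x, y) \<in> udg V \<and>
      (\<forall>z. (x, z) \<in> udg V \<and> cidx k \<alpha> x z = cidx k \<alpha> x y \<longrightarrow> lex_le (uID idf x y) (uID idf x z))}"

text \<open>Sink step. State: (I, J, I-map, T). Processing one cone c' of the current vertex x.\<close>
type_synonym sstate = "complex set \<times> complex list \<times> (complex \<Rightarrow> complex set) \<times> (complex \<times> complex) set"

definition proc_cone :: "nat \<Rightarrow> real \<Rightarrow> (complex \<Rightarrow> nat) \<Rightarrow> complex \<Rightarrow> sstate \<Rightarrow> nat \<Rightarrow> sstate" where
  "proc_cone k \<alpha> idf x st c' = (case st of (I, J, Imap, T) \<Rightarrow>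
     (let S = Imap x \<inter> cone k \<alpha> x c' in
      if S = {} then st else
      (let w = (THE w. w \<in> S \<and> (\<forall>w'\<in>S. lex_le (dID idf w x) (dID idf w' x))) in
        (I - {w}, J @ [w], Imap(w := S), insert (w, x) T))))"

inductive sink_run :: "nat \<Rightarrow> real \<Rightarrow> (complex \<Rightarrow> nat) \<Rightarrow> (complex \<times> complex) set \<Rightarrow>
    complex \<Rightarrow> nat \<Rightarrow> sstate \<Rightarrow> bool"
  for k \<alpha> idf EY v c where
  init: "I0 = {x. (x, v) \<in> EY \<and> x \<in> cone k \<alpha> v c} \<Longrightarrow>
         sink_run k \<alpha> idf EY v c (I0, [v], (\<lambda>_. {})(v := I0), {})"
| step: "sink_run k \<alpha> idf EY v c (I, x # J, Imap, T) \<Longrightarrow> I \<noteq> {} \<Longrightarrow>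
         sink_run k \<alpha> idf EY v c (foldl (proc_cone k \<alpha> idf x) (I, J, Imap, T) [0..<k])"

text \<open>E_YS: union of the final trees T(v) (the loop has terminated, i.e. I is empty).\<close>
definition sinkE :: "nat \<Rightarrow> real \<Rightarrow> (complex \<Rightarrow> nat) \<Rightarrow> complex set \<Rightarrow> (complex \<times> complex) set" where
  "sinkE k \<alpha> idf V = {e. \<exists>v\<in>V. \<exists>c<k. \<exists>J Imap T.
      sink_run k \<alpha> idf (yao k \<alpha> idf V) v c ({}, J, Imap, T) \<and> e \<in> T}"

end

theory Submission
  imports Defs
begin


lemma lex_le_total: "lex_le p q \<or> lex_le q p"
  by (cases p; cases q) (auto simp: lex_le_def)

lemma lex_le_refl: "lex_le p p"
  by (cases p) (auto simp: lex_le_def)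

lemma lex_le_trans: "lex_le p q \<Longrightarrow> lex_le q r \<Longrightarrow> lex_le p r"
  by (cases p; cases q; cases r) (auto simp: lex_le_def)

lemma lex_le_antisym: "lex_le p q \<Longrightarrow> lex_le q p \<Longrightarrow> p = q"
  by (cases p; cases q) (auto simp: lex_le_def)

lemma finite_min_lex:
  assumes "finite S" "S \<noteq> {}"
  shows "\<exists>w\<in>S. \<forall>w'\<in>S. lex_le (f w) (f w')"
  using assms
proof (induction S rule: finite_ne_induct)
  case (singleton x) then show ?case by (simp add: lex_le_refl)
next
  case (insert x F)
  then obtain w where w: "w \<in> F" "\<forall>w'\<in>F. lex_le (f w) (f w')" by blast
  show ?case
  proof (cases "lex_le (f x) (f w)")
    case True then show ?thesis using w by (auto intro: lex_le_trans lex_le_refl)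
  next
    case False then have "lex_le (f w) (f x)" using lex_le_total by blast
    then show ?thesis using w by auto
  qed
qed

lemma cidx_lt: "k > 0 \<Longrightarrow> cidx k \<alpha> x y < k"
proof -
  assume k: "k > 0"
  let ?t = "frac ((Arg (y - x) - \<alpha>) / (2 * pi))"
  have "?t < 1" "0 \<le> ?t" by (auto simp: frac_lt_1 frac_ge_0)
  then have "real k * ?t < real k" using k by simp
  then have "\<lfloor>real k * ?t\<rfloor> < int k" by (simp add: floor_less_iff)
  then show ?thesis unfolding cidx_def using k by (simp add: nat_less_iff)
qed



locale sk =
  fixes k :: nat and \<alpha> :: real and idf :: "complex \<Rightarrow> nat" and V :: "complex set"
    and v :: complex and c :: nat
  assumes finV: "finite V" and inj: "inj_on idf V" and kpos: "k > 0"
begin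

definition I0 :: "complex set" where
  "I0 = {x. (x, v) \<in> yao k \<alpha> idf V \<and> x \<in> cone k \<alpha> v c}"

lemma I0_V: "I0 \<subseteq> V"
  by (auto simp: I0_def yao_def udg_def)

lemma fin_I0: "finite I0"
  using I0_V finV finite_subset by blast

lemma v_notin_I0: "v \<notin> I0"
  by (auto simp: I0_def cone_def)

lemma I0_cone: "I0 \<subseteq> cone k \<alpha> v c"
  by (auto simp: I0_def)

definition okE :: "(complex \<times> complex) set \<Rightarrow> complex \<Rightarrow> complex \<Rightarrow> complex \<Rightarrow> bool" where
  "okE T z a b \<longleftrightarrow> a \<in> cone k \<alpha> v c \<and> (a, b) \<in> T \<and> a \<in> cone k \<alpha> b (cidx k \<alpha> b z) \<and>
     lex_le (dID idf a b) (dID idf z b)"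

definition PP :: "(complex \<times> complex) set \<Rightarrow> complex \<Rightarrow> complex \<Rightarrow> complex list \<Rightarrow> bool" where
  "PP T z y ws \<longleftrightarrow> ws \<noteq> [] \<and> hd ws = v \<and> last ws = y \<and>
     (\<forall>i\<in>{1..<length ws}. okE T z (ws ! i) (ws ! (i - 1)))"

lemma PP_mono: "PP T z y ws \<Longrightarrow> T \<subseteq> T' \<Longrightarrow> PP T' z y ws"
  unfolding PP_def okE_def by blast

lemma PP_snoc:
  assumes P: "PP T z x ws" and TT: "T \<subseteq> T'" and ok: "okE T' z w x"
  shows "PP T' z w (ws @ [w])"
proof -
  from P have ne: "ws \<noteq> []" and h: "hd ws = v" and l: "last ws = x"
    and A: "\<forall>i\<in>{1..<length ws}. okE T z (ws ! i) (ws ! (i - 1))" by (auto simp: PP_def)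
  have "\<forall>i\<in>{1..<length (ws @ [w])}. okE T' z ((ws @ [w]) ! i) ((ws @ [w]) ! (i - 1))"
  proof
    fix i assume i: "i \<in> {1..<length (ws @ [w])}"
    show "okE T' z ((ws @ [w]) ! i) ((ws @ [w]) ! (i - 1))"
    proof (cases "i < length ws")
      case True
      then have "okE T z (ws ! i) (ws ! (i - 1))" using A i by auto
      then show ?thesis using True TT by (auto simp: nth_append okE_def)
    next
      case False
      then have ii: "i = length ws" using i by auto
      have "(ws @ [w]) ! i = w" using ii by simp
      moreover have "(ws @ [w]) ! (i - 1) = x" using ii ne l
        by (simp add: nth_append last_conv_nth)
      ultimately show ?thesis using ok by simp
    qed
  qed
  then show ?thesis using ne h unfolding PP_def by simp
qed

definition Pj :: "complex \<Rightarrow> nat \<Rightarrow> complex set \<Rightarrow> complex set" where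
  "Pj x j A = {z\<in>A. z \<noteq> x \<and> j \<le> cidx k \<alpha> x z}"

definition Gen :: "complex set \<Rightarrow> complex list \<Rightarrow> (complex \<Rightarrow> complex set) \<Rightarrow>
    (complex \<times> complex) set \<Rightarrow> complex set \<Rightarrow> bool" where
  "Gen I J Imap T P \<longleftrightarrow> I \<subseteq> I0 \<and> (\<forall>y. Imap y \<subseteq> I0) \<and> distinct J \<and> set J \<inter> I = {} \<and>
    (\<forall>y\<in>set J. Imap y - {y} \<subseteq> I) \<and> P \<subseteq> I \<and>
    (\<forall>y\<in>set J. \<forall>y'\<in>set J. y \<noteq> y' \<longrightarrow> (Imap y - {y}) \<inter> (Imap y' - {y'}) = {}) \<and>
    (\<forall>y\<in>set J. P \<inter> (Imap y - {y}) = {}) \<and>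
    I \<subseteq> (\<Union>y\<in>set J. Imap y) \<union> P \<and>
    set J \<subseteq> insert v (I0 - I) \<and>
    (\<forall>y\<in>I0 - I. y \<in> Imap y) \<and>
    (\<forall>y\<in>insert v (I0 - I). \<forall>z\<in>Imap y. \<exists>ws. PP T z y ws)"

lemma the_min:
  assumes "S \<noteq> {}" "S \<subseteq> V"
  shows "(THE w. w \<in> S \<and> (\<forall>w'\<in>S. lex_le (dID idf w x) (dID idf w' x))) \<in> S \<and>
    (\<forall>w'\<in>S. lex_le (dID idf (THE w. w \<in> S \<and> (\<forall>w'\<in>S. lex_le (dID idf w x) (dID idf w' x))) x) (dID idf w' x))"
proof (rule theI')
  have fin: "finite S" using assms finV finite_subset by blast
  obtain w where w: "w \<in> S" "\<forall>w'\<in>S. lex_le (dID idf w x) (dID idf w' x)"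
    using finite_min_lex[OF fin assms(1), of "\<lambda>w. dID idf w x"] by blast
  show "\<exists>!w. w \<in> S \<and> (\<forall>w'\<in>S. lex_le (dID idf w x) (dID idf w' x))"
  proof (rule ex1I[of _ w])
    show "w \<in> S \<and> (\<forall>w'\<in>S. lex_le (dID idf w x) (dID idf w' x))" using w by blast
  next
    fix w2 assume w2: "w2 \<in> S \<and> (\<forall>w'\<in>S. lex_le (dID idf w2 x) (dID idf w' x))"
    then have "dID idf w2 x = dID idf w x" using w lex_le_antisym by blast
    then have "idf w2 = idf w" by (simp add: dID_def)
    then show "w2 = w" using inj w(1) w2 assms(2) by (meson inj_on_def subsetD)
  qed
qed

end

context sk begin

lemma proc_step:
  assumes G: "Gen I J Imap T (Pj x j A)" and A: "Imap x = A" and xI: "x \<notin> I"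
    and xJ: "x \<notin> set J" and xQ: "x \<in> insert v (I0 - I)"
    and eq: "proc_cone k \<alpha> idf x (I, J, Imap, T) j = (I', J', Imap', T')"
  shows "Gen I' J' Imap' T' (Pj x (Suc j) A) \<and> Imap' x = A \<and> x \<notin> I' \<and> x \<notin> set J' \<and>
    x \<in> insert v (I0 - I') \<and> T \<subseteq> T' \<and> 2 * card I' + length J' \<le> 2 * card I + length J"
proof -
  define S where "S = Imap x \<inter> cone k \<alpha> x j"
  have S_eq: "S = {z\<in>A. z \<noteq> x \<and> cidx k \<alpha> x z = j}" by (auto simp: S_def A cone_def)
  have split: "Pj x j A = Pj x (Suc j) A \<union> S" by (auto simp: Pj_def S_eq)
  have dsj: "Pj x (Suc j) A \<inter> S = {}" by (auto simp: Pj_def S_eq)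
  have g1: "I \<subseteq> I0" and g2: "\<forall>y. Imap y \<subseteq> I0" and g3: "distinct J" and g4: "set J \<inter> I = {}"
    and g5: "\<forall>y\<in>set J. Imap y - {y} \<subseteq> I" and g6: "Pj x j A \<subseteq> I"
    and g7: "\<forall>y\<in>set J. \<forall>y'\<in>set J. y \<noteq> y' \<longrightarrow> (Imap y - {y}) \<inter> (Imap y' - {y'}) = {}"
    and g8: "\<forall>y\<in>set J. Pj x j A \<inter> (Imap y - {y}) = {}"
    and g9: "I \<subseteq> (\<Union>y\<in>set J. Imap y) \<union> Pj x j A"
    and g10: "set J \<subseteq> insert v (I0 - I)"
    and g11: "\<forall>y\<in>I0 - I. y \<in> Imap y"
    and g12: "\<forall>y\<in>insert v (I0 - I). \<forall>z\<in>Imap y. \<exists>ws. PP T z y ws"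
    using G unfolding Gen_def by auto
  have finI: "finite I" using g1 fin_I0 finite_subset by blast
  show ?thesis
  proof (cases "S = {}")
    case True
    then have "proc_cone k \<alpha> idf x (I, J, Imap, T) j = (I, J, Imap, T)"
      by (simp add: proc_cone_def Let_def S_def)
    then have e: "I' = I" "J' = J" "Imap' = Imap" "T' = T" using eq by auto
    have "Pj x (Suc j) A = Pj x j A" using split True by simp
    then show ?thesis using G e A xI xJ xQ by simp
  next
    case False
    define w where "w = (THE w. w \<in> S \<and> (\<forall>w'\<in>S. lex_le (dID idf w x) (dID idf w' x)))"
    have SI: "S \<subseteq> I" using split g6 by auto
    have SV: "S \<subseteq> V" using SI g1 I0_V by auto
    have wS: "w \<in> S" and wmin: "\<forall>w'\<in>S. lex_le (dID idf w x) (dID idf w' x)"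
      using the_min[OF False SV, of x] unfolding w_def by auto
    have "proc_cone k \<alpha> idf x (I, J, Imap, T) j = (I - {w}, J @ [w], Imap(w := S), insert (w, x) T)"
      using False by (simp add: proc_cone_def Let_def S_def w_def)
    then have e: "I' = I - {w}" "J' = J @ [w]" "Imap' = Imap(w := S)" "T' = insert (w, x) T"
      using eq by auto
    have wI: "w \<in> I" using wS SI by auto
    have wx: "w \<noteq> x" using wI xI by auto
    have wJ: "w \<notin> set J" using wI g4 by auto
    have wP: "w \<in> Pj x j A" using wS split by auto
    have wcid: "cidx k \<alpha> x w = j" using wS S_eq by auto
    have Gn: "Gen (I - {w}) (J @ [w]) (Imap(w := S)) (insert (w, x) T) (Pj x (Suc j) A)"
      unfolding Gen_def
    proof (intro conjI)
      show "I - {w} \<subseteq> I0" using g1 by auto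
      show "\<forall>y. (Imap(w := S)) y \<subseteq> I0" using g2 S_def by auto
      show "distinct (J @ [w])" using g3 wJ by simp
      show "set (J @ [w]) \<inter> (I - {w}) = {}" using g4 by auto
      show "\<forall>y\<in>set (J @ [w]). (Imap(w := S)) y - {y} \<subseteq> I - {w}"
      proof
        fix y assume y: "y \<in> set (J @ [w])"
        show "(Imap(w := S)) y - {y} \<subseteq> I - {w}"
        proof (cases "y = w")
          case True then show ?thesis using SI by auto
        next
          case False
          then have "y \<in> set J" using y by auto
          then show ?thesis using False g5 g8 wP by auto
        qed
      qed
      show "Pj x (Suc j) A \<subseteq> I - {w}" using g6 split dsj wS by auto
      show "\<forall>y\<in>set (J @ [w]). \<forall>y'\<in>set (J @ [w]). y \<noteq> y' \<longrightarrow>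
          ((Imap(w := S)) y - {y}) \<inter> ((Imap(w := S)) y' - {y'}) = {}"
      proof (intro ballI impI)
        fix y y' assume y: "y \<in> set (J @ [w])" and y': "y' \<in> set (J @ [w])" and ne: "y \<noteq> y'"
        have SP: "S \<subseteq> Pj x j A" using split by auto
        show "((Imap(w := S)) y - {y}) \<inter> ((Imap(w := S)) y' - {y'}) = {}"
        proof (cases "y = w")
          case True
          then have "y' \<in> set J" "y' \<noteq> w" using y' ne by auto
          then show ?thesis using True g8 SP by auto
        next
          case False
          then have yJ: "y \<in> set J" using y by auto
          show ?thesis
          proof (cases "y' = w")
            case True then show ?thesis using yJ False g8 SP by auto
          next
            case False
            then have "y' \<in> set J" using y' by auto
            then show ?thesis using yJ False \<open>y \<noteq> w\<close> ne g7 by auto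
          qed
        qed
      qed
      show "\<forall>y\<in>set (J @ [w]). Pj x (Suc j) A \<inter> ((Imap(w := S)) y - {y}) = {}"
      proof
        fix y assume y: "y \<in> set (J @ [w])"
        show "Pj x (Suc j) A \<inter> ((Imap(w := S)) y - {y}) = {}"
        proof (cases "y = w")
          case True then show ?thesis using dsj by auto
        next
          case False
          then have "y \<in> set J" using y by auto
          then show ?thesis using False g8 split by auto
        qed
      qed
      show "I - {w} \<subseteq> (\<Union>y\<in>set (J @ [w]). (Imap(w := S)) y) \<union> Pj x (Suc j) A"
      proof
        fix z assume z: "z \<in> I - {w}"
        then consider (a) y where "y \<in> set J" "z \<in> Imap y" | (b) "z \<in> Pj x j A" using g9 by auto
        then show "z \<in> (\<Union>y\<in>set (J @ [w]). (Imap(w := S)) y) \<union> Pj x (Suc j) A"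
        proof cases
          case a
          then have "y \<noteq> w" using wJ by auto
          then show ?thesis using a by auto
        next
          case b then show ?thesis using split by auto
        qed
      qed
      show "set (J @ [w]) \<subseteq> insert v (I0 - (I - {w}))" using g10 wI g1 by auto
      show "\<forall>y\<in>I0 - (I - {w}). y \<in> (Imap(w := S)) y" using g11 wS by auto
      show "\<forall>y\<in>insert v (I0 - (I - {w})). \<forall>z\<in>(Imap(w := S)) y. \<exists>ws. PP (insert (w, x) T) z y ws"
      proof (intro ballI)
        fix y z assume y: "y \<in> insert v (I0 - (I - {w}))" and z: "z \<in> (Imap(w := S)) y"
        show "\<exists>ws. PP (insert (w, x) T) z y ws"
        proof (cases "y = w")
          case True
          then have zS: "z \<in> S" using z by simp
          then have "z \<in> Imap x" using S_def by auto
          then obtain ws where ws: "PP T z x ws" using g12 xQ by blast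
          have ok: "okE (insert (w, x) T) z w x"
            unfolding okE_def
          proof (intro conjI)
            show "w \<in> cone k \<alpha> v c" using wI g1 I0_cone by auto
            show "(w, x) \<in> insert (w, x) T" by simp
            have "cidx k \<alpha> x z = j" using zS S_eq by auto
            then show "w \<in> cone k \<alpha> x (cidx k \<alpha> x z)" using wcid wx by (simp add: cone_def)
            show "lex_le (dID idf w x) (dID idf z x)" using wmin zS by auto
          qed
          show ?thesis using PP_snoc[OF ws _ ok] True by blast
        next
          case False
          then have "y \<in> insert v (I0 - I)" using y by auto
          moreover have "z \<in> Imap y" using z False by simp
          ultimately obtain ws where "PP T z y ws" using g12 by blast
          then show ?thesis using PP_mono by blast
        qed
      qed
    qed
    have "card (I - {w}) = card I - 1" using wI finI by simp
    moreover have "card I \<ge> 1" using wI finI card_0_eq by fastforce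
    ultimately have "2 * card (I - {w}) + length (J @ [w]) \<le> 2 * card I + length J" by simp
    then show ?thesis using Gn e A wx xI xJ xQ by auto
  qed
qed

end

context sk begin

lemma fold_step:
  assumes G: "Gen I J Imap T (Pj x 0 A)" and A: "Imap x = A" and xI: "x \<notin> I"
    and xJ: "x \<notin> set J" and xQ: "x \<in> insert v (I0 - I)"
  shows "case foldl (proc_cone k \<alpha> idf x) (I, J, Imap, T) [0..<n] of (I', J', Imap', T') \<Rightarrow>
    Gen I' J' Imap' T' (Pj x n A) \<and> Imap' x = A \<and> x \<notin> I' \<and> x \<notin> set J' \<and>
    x \<in> insert v (I0 - I') \<and> T \<subseteq> T' \<and> 2 * card I' + length J' \<le> 2 * card I + length J"
proof (induction n)
  case 0 then show ?case using assms by auto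
next
  case (Suc n)
  obtain I1 J1 M1 T1 where f: "foldl (proc_cone k \<alpha> idf x) (I, J, Imap, T) [0..<n] = (I1, J1, M1, T1)"
    by (metis prod_cases4)
  obtain I2 J2 M2 T2 where f2: "proc_cone k \<alpha> idf x (I1, J1, M1, T1) n = (I2, J2, M2, T2)"
    by (metis prod_cases4)
  have IH: "Gen I1 J1 M1 T1 (Pj x n A) \<and> M1 x = A \<and> x \<notin> I1 \<and> x \<notin> set J1 \<and>
    x \<in> insert v (I0 - I1) \<and> T \<subseteq> T1 \<and> 2 * card I1 + length J1 \<le> 2 * card I + length J"
    using Suc f by auto
  have "Gen I2 J2 M2 T2 (Pj x (Suc n) A) \<and> M2 x = A \<and> x \<notin> I2 \<and> x \<notin> set J2 \<and>
    x \<in> insert v (I0 - I2) \<and> T1 \<subseteq> T2 \<and> 2 * card I2 + length J2 \<le> 2 * card I1 + length J1"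
    using proc_step[OF _ _ _ _ _ f2] IH by blast
  then show ?case using f f2 IH by force
qed

lemma Pj_0: "Pj x 0 A = A - {x}" by (auto simp: Pj_def)
lemma Pj_k: "Pj x k A = {}" using cidx_lt[OF kpos] by (auto simp: Pj_def not_le)

lemma big_step:
  assumes G: "Gen I (x # J) Imap T {}"
  shows "case foldl (proc_cone k \<alpha> idf x) (I, J, Imap, T) [0..<k] of (I', J', Imap', T') \<Rightarrow>
    Gen I' J' Imap' T' {} \<and> T \<subseteq> T' \<and> 2 * card I' + length J' < 2 * card I + length (x # J)"
proof -
  have G0: "Gen I J Imap T (Pj x 0 (Imap x))" and xI: "x \<notin> I" and xJ: "x \<notin> set J"
    and xQ: "x \<in> insert v (I0 - I)"
    using G unfolding Gen_def Pj_0 by auto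
  show ?thesis using fold_step[OF G0 refl xI xJ xQ, of k] unfolding Pj_k
    by (auto split: prod.splits)
qed

definition I0c where "I0c = I0"

lemma run_inv:
  assumes "sink_run k \<alpha> idf (yao k \<alpha> idf V) v c st"
  shows "case st of (I, J, Imap, T) \<Rightarrow> Gen I J Imap T {}"
  using assms
proof (induction rule: sink_run.induct)
  case (init I0')
  then have e: "I0' = I0" by (simp add: I0_def)
  have "Gen I0 [v] ((\<lambda>_. {})(v := I0)) {} {}" unfolding Gen_def
  proof (intro conjI)
    show "\<forall>y\<in>insert v (I0 - I0). \<forall>z\<in>((\<lambda>_. {})(v := I0)) y. \<exists>ws. PP {} z y ws"
      by (auto intro!: exI[of _ "[v]"] simp: PP_def)
  qed (use v_notin_I0 in auto)
  then show ?case using e by simp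
next
  case (step I x J Imap T)
  have "case foldl (proc_cone k \<alpha> idf x) (I, J, Imap, T) [0..<k] of (I', J', Imap', T') \<Rightarrow>
    Gen I' J' Imap' T' {}" using big_step[OF step.IH[simplified]] by (auto split: prod.splits)
  then show ?case by simp
qed

lemma run_term:
  "sink_run k \<alpha> idf (yao k \<alpha> idf V) v c (I, J, Imap, T) \<Longrightarrow>
   \<exists>J' Imap' T'. sink_run k \<alpha> idf (yao k \<alpha> idf V) v c ({}, J', Imap', T') \<and> T \<subseteq> T'"
proof (induction "2 * card I + length J" arbitrary: I J Imap T rule: less_induct)
  case less
  show ?case
  proof (cases "I = {}")
    case True then show ?thesis using less.prems by blast
  next
    case False
    have G: "Gen I J Imap T {}" using run_inv[OF less.prems] by simp
    then have "I \<subseteq> (\<Union>y\<in>set J. Imap y)" unfolding Gen_def by auto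
    then have "J \<noteq> []" using False by auto
    then obtain x J0 where J: "J = x # J0" by (cases J) auto
    obtain I2 J2 M2 T2 where f: "foldl (proc_cone k \<alpha> idf x) (I, J0, Imap, T) [0..<k] = (I2, J2, M2, T2)"
      by (metis prod_cases4)
    have r: "sink_run k \<alpha> idf (yao k \<alpha> idf V) v c (I2, J2, M2, T2)"
      using sink_run.step[OF less.prems[unfolded J] False] f by simp
    have m: "T \<subseteq> T2 \<and> 2 * card I2 + length J2 < 2 * card I + length J"
      using big_step[OF G[unfolded J]] f J by simp
    then obtain J' Imap' T' where "sink_run k \<alpha> idf (yao k \<alpha> idf V) v c ({}, J', Imap', T')" "T2 \<subseteq> T'"
      using less.hyps[OF _ r] by blast
    then show ?thesis using m by blast
  qed
qed

end


theorem lemma2: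
  fixes V :: "complex set" and k :: nat and \<alpha> :: real and idf :: "complex \<Rightarrow> nat"
    and u v :: complex
  assumes "finite V" and "inj_on idf V" and "k > 0"
    and "(u, v) \<in> yao k \<alpha> idf V"
  shows "\<exists>ws :: complex list. ws \<noteq> [] \<and> hd ws = v \<and> last ws = u \<and>
    (\<forall>i\<in>{1..<length ws}.
        ws ! i \<in> cone k \<alpha> v (cidx k \<alpha> v u) \<and>
        (ws ! i, ws ! (i - 1)) \<in> sinkE k \<alpha> idf V \<and>
        ws ! i \<in> cone k \<alpha> (ws ! (i - 1)) (cidx k \<alpha> (ws ! (i - 1)) u) \<and>
        lex_le (dID idf (ws ! i) (ws ! (i - 1))) (dID idf u (ws ! (i - 1))))"
proof -
  define c where "c = cidx k \<alpha> v u"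
  interpret sk k \<alpha> idf V v c using assms(1-3) by unfold_locales
  have uv: "u \<in> V" "v \<in> V" "u \<noteq> v" using assms(4) by (auto simp: yao_def udg_def)
  have uc: "u \<in> cone k \<alpha> v c" unfolding cone_def c_def using uv(3) by simp
  have uI0: "u \<in> I0" unfolding I0_def using assms(4) uc by blast
  have ck: "c < k" using cidx_lt[OF assms(3)] c_def by simp
  have r0: "sink_run k \<alpha> idf (yao k \<alpha> idf V) v c (I0, [v], (\<lambda>_. {})(v := I0), {})"
    by (rule sink_run.init) (simp add: I0_def)
  obtain J' M' T' where r: "sink_run k \<alpha> idf (yao k \<alpha> idf V) v c ({}, J', M', T')"
    using run_term[OF r0] by blast
  have G: "Gen {} J' M' T' {}" using run_inv[OF r] by simp
  then have "u \<in> M' u" using uI0 unfolding Gen_def by auto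
  then obtain ws where ws: "PP T' u u ws" using G uI0 unfolding Gen_def by blast
  have TS: "T' \<subseteq> sinkE k \<alpha> idf V"
  proof
    fix e assume e: "e \<in> T'"
    have "\<exists>J Imap T. sink_run k \<alpha> idf (yao k \<alpha> idf V) v c ({}, J, Imap, T) \<and> e \<in> T"
      using r e by blast
    then show "e \<in> sinkE k \<alpha> idf V" unfolding sinkE_def using uv(2) ck by blast
  qed
  show ?thesis
  proof (rule exI[of _ ws], intro conjI ballI)
    show "ws \<noteq> []" "hd ws = v" "last ws = u" using ws unfolding PP_def by auto
  next
    fix i assume i: "i \<in> {1..<length ws}"
    then have o: "okE T' u (ws ! i) (ws ! (i - 1))" using ws unfolding PP_def by blast
    then have "ws ! i \<in> cone k \<alpha> v c" unfolding okE_def by blast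
    then show "ws ! i \<in> cone k \<alpha> v (cidx k \<alpha> v u)" unfolding c_def .
    show "(ws ! i, ws ! (i - 1)) \<in> sinkE k \<alpha> idf V" using o TS unfolding okE_def by blast
    show "ws ! i \<in> cone k \<alpha> (ws ! (i - 1)) (cidx k \<alpha> (ws ! (i - 1)) u)" using o unfolding okE_def by blast
    show "lex_le (dID idf (ws ! i) (ws ! (i - 1))) (dID idf u (ws ! (i - 1)))" using o unfolding okE_def by blast
  qed
qed


end
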